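(* Consider the fixed-final-time optimal control problem described in the context. Along an optimal trajectory, the optimal Evader heading $\psi^*$ is constant backwards in time from the final time $T$ until either (1) the constraint is reached (i.e. $\|\mathbf{x}\|=1$), or (2) the initial condition $\mathbf{x}_0$ (time $0$) is reached.
   Context: Pursuer-fixed frame: the Evader's relative position $\mathbf{x}(t)=(x(t),y(t))\in\mathbb{R}^2$ evolves as $\dot x=\mu\cos\psi(t)-1$, $\dot y=\mu\sin\psi(t)$, $\mathbf{x}(0)=\mathbf{x}_0$ with $\|\mathbf{x}_0\|\ge1$, where $\mu\in(0,1)$ and $\psi(t)$ is the Evader's heading. For a fixed final time $T>0$, the Evader maximizes $\|\mathbf{x}(T)\|^2$ subject to the state constraint $\|\mathbf{x}(t)\|\ge 1$ for all $t\in[0,T]$. *)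

theory Defs
  imports "HOL-Analysis.Analysis"
begin

definition admissible_heading :: "real \<Rightarrow> (real \<Rightarrow> real) \<Rightarrow> bool" where
  "admissible_heading T \<psi> \<longleftrightarrow> set_borel_measurable lborel {0..T} \<psi>"

text \<open>Relative position in the Pursuer-fixed frame (solution of the ODE
  xdot = mu cos psi - 1, ydot = mu sin psi, x(0) = x0, in integral form).\<close>
definition traj :: "real \<Rightarrow> real \<times> real \<Rightarrow> (real \<Rightarrow> real) \<Rightarrow> real \<Rightarrow> real \<times> real" where
  "traj \<mu> x0 \<psi> t =
     (fst x0 + integral {0..t} (\<lambda>s. \<mu> * cos (\<psi> s) - 1),
      snd x0 + integral {0..t} (\<lambda>s. \<mu> * sin (\<psi> s)))"

definition feasible_heading :: "real \<Rightarrow> real \<times> real \<Rightarrow> real \<Rightarrow> (real \<Rightarrow> real) \<Rightarrow> bool" where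
  "feasible_heading \<mu> x0 T \<psi> \<longleftrightarrow>
     admissible_heading T \<psi> \<and> (\<forall>t\<in>{0..T}. norm (traj \<mu> x0 \<psi> t) \<ge> 1)"

definition optimal_heading :: "real \<Rightarrow> real \<times> real \<Rightarrow> real \<Rightarrow> (real \<Rightarrow> real) \<Rightarrow> bool" where
  "optimal_heading \<mu> x0 T \<psi> \<longleftrightarrow>
     feasible_heading \<mu> x0 T \<psi> \<and>
     (\<forall>\<phi>. feasible_heading \<mu> x0 T \<phi> \<longrightarrow>
            (norm (traj \<mu> x0 \<phi> T))\<^sup>2 \<le> (norm (traj \<mu> x0 \<psi> T))\<^sup>2)"

definition last_contact :: "real \<Rightarrow> real \<times> real \<Rightarrow> real \<Rightarrow> (real \<Rightarrow> real) \<Rightarrow> real" where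
  "last_contact \<mu> x0 T \<psi> = Sup ({t\<in>{0..T}. norm (traj \<mu> x0 \<psi> t) = 1} \<union> {0})"

end

theory Submission
  imports Defs
begin

lemma setint:
  fixes \<psi> h :: "real \<Rightarrow> real"
  assumes meas: "set_borel_measurable lborel {0..T} \<psi>" and hc: "continuous_on UNIV h"
    and hb: "\<And>y. \<bar>h y\<bar> \<le> B" and ab: "0 \<le> a" "b \<le> T"
  shows "set_integrable lborel {a..b} (\<lambda>s. h (\<psi> s))"
proof -
  have m0: "(\<lambda>x. indicator {0..T} x *\<^sub>R \<psi> x) \<in> borel_measurable lborel"
    using meas unfolding set_borel_measurable_def .
  have hm: "h \<in> borel_measurable borel" using hc by (simp add: borel_measurable_continuous_onI)
  have m1: "(\<lambda>x. h (indicator {0..T} x *\<^sub>R \<psi> x)) \<in> borel_measurable lborel"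
    using measurable_compose[OF m0 hm] by (simp add: comp_def)
  have eq: "(\<lambda>x. indicator {a..b} x *\<^sub>R h (\<psi> x)) = (\<lambda>x. indicator {a..b} x *\<^sub>R h (indicator {0..T} x *\<^sub>R \<psi> x))"
    using ab by (auto simp: indicator_def fun_eq_iff)
  show ?thesis unfolding set_integrable_def eq
    apply (rule integrableI_bounded_set[where A="{a..b}" and B=B])
    using m1 hb by (auto simp: indicator_def emeasure_lborel_Icc_eq)
qed

lemma hkint:
  fixes \<psi> h :: "real \<Rightarrow> real"
  assumes meas: "set_borel_measurable lborel {0..T} \<psi>" and hc: "continuous_on UNIV h"
    and hb: "\<And>y. \<bar>h y\<bar> \<le> B" and ab: "0 \<le> a" "b \<le> T"
  shows "(\<lambda>s. h (\<psi> s)) integrable_on {a..b}"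
  using set_borel_integral_eq_integral(1)[OF setint[OF assms]] .


lemma cb1: fixes \<mu> y :: real assumes mu: "0 < \<mu>" shows "\<bar>\<mu> * cos y\<bar> \<le> \<mu>" "\<bar>\<mu> * sin y\<bar> \<le> \<mu>"
  using mult_left_le[OF abs_cos_le_one[of y], of \<mu>] mult_left_le[OF abs_sin_le_one[of y], of \<mu>] mu by (simp_all add: abs_mult)
lemma cb2: fixes \<mu> y :: real assumes mu: "0 < \<mu>" shows "\<bar>\<mu> * cos y - 1\<bar> \<le> \<mu> + 1"
  using cb1[OF mu, of y] by linarith
lemma kbnd: fixes \<mu> y c :: real assumes mu: "0 < \<mu>" shows "\<bar>\<mu> * (cos c - cos y)\<bar> \<le> 2 * \<mu>" "\<bar>\<mu> * (sin c - sin y)\<bar> \<le> 2 * \<mu>"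
proof -
  have "\<bar>\<mu> * (cos c - cos y)\<bar> = \<bar>\<mu> * cos c - \<mu> * cos y\<bar>" by (simp add: algebra_simps)
  then show "\<bar>\<mu> * (cos c - cos y)\<bar> \<le> 2 * \<mu>" using cb1[OF mu, of c] cb1[OF mu, of y] by linarith
  have "\<bar>\<mu> * (sin c - sin y)\<bar> = \<bar>\<mu> * sin c - \<mu> * sin y\<bar>" by (simp add: algebra_simps)
  then show "\<bar>\<mu> * (sin c - sin y)\<bar> \<le> 2 * \<mu>" using cb1[OF mu, of c] cb1[OF mu, of y] by linarith
qed
lemma t150: fixes I C \<mu> :: real assumes "\<bar>I\<bar> \<le> 2 * \<mu> * C" "C = 0" shows "I = 0" using assms by simp
lemma t159: fixes I J C \<mu> b a :: real assumes "\<bar>I\<bar> \<le> 2 * \<mu> * C" "\<bar>J\<bar> \<le> 2 * \<mu> * C" "C \<le> b - a" "0 < \<mu>"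
  shows "\<bar>I\<bar> + \<bar>J\<bar> \<le> 4 * \<mu> * (b - a)"
proof -
  have "2 * \<mu> * C \<le> 2 * \<mu> * (b - a)" using assms by (intro mult_left_mono) auto
  then show ?thesis using assms by linarith
qed
lemma t176: fixes A B :: real assumes "A + (B^2 + C^2) \<le> 0" shows "A \<le> 0"
  using assms zero_le_power2[of B] zero_le_power2[of C] by linarith
lemma t183: fixes c y :: real shows "((cos c - cos y)^2 + (sin c - sin y)^2) / 2 = 1 - cos (c - y)"
proof -
  have "(cos c - cos y)^2 + (sin c - sin y)^2 = ((sin c)^2 + (cos c)^2) + ((sin y)^2 + (cos y)^2) - 2 * (cos c * cos y + sin c * sin y)"
    by (simp add: power2_eq_square algebra_simps)
  then show ?thesis by (simp add: cos_diff)
qed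
lemma t202: fixes c \<mu> s :: real shows "cos c * (\<mu> * (cos c - cos s)) + sin c * (\<mu> * (sin c - sin s)) = \<mu> * (1 - cos (c - s))"
proof -
  have "cos c * (\<mu> * (cos c - cos s)) + sin c * (\<mu> * (sin c - sin s)) = \<mu> * ((sin c)^2 + (cos c)^2) - \<mu> * (cos c * cos s + sin c * sin s)"
    by algebra
  then show ?thesis by (simp add: cos_diff algebra_simps)
qed

lemma window:
  fixes \<psi> :: "real \<Rightarrow> real" and x0 :: "real \<times> real"
  assumes mu: "0 < \<mu>"
    and meas: "admissible_heading T \<psi>"
    and feas: "\<forall>t\<in>{0..T}. norm (traj \<mu> x0 \<psi> t) \<ge> 1"
    and opt: "\<And>\<phi>. feasible_heading \<mu> x0 T \<phi> \<Longrightarrow>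
            (norm (traj \<mu> x0 \<phi> T))\<^sup>2 \<le> (norm (traj \<mu> x0 \<psi> T))\<^sup>2"
    and X: "traj \<mu> x0 \<psi> T = (r * cos c, r * sin c)" and r: "0 < r"
    and marg: "\<forall>t\<in>{a..T}. norm (traj \<mu> x0 \<psi> t) \<ge> 1 + m"
    and len: "4 * \<mu> * (b - a) \<le> m"
    and ab: "0 \<le> a" "a \<le> b" "b \<le> T"
  shows "AE t in lborel. t \<in> {a..b} \<longrightarrow> cos (\<psi> t) = cos c \<and> sin (\<psi> t) = sin c"
proof -
  have measp: "set_borel_measurable lborel {0..T} \<psi>" using meas unfolding admissible_heading_def .
  define \<phi> where "\<phi> t = (if t \<in> {a..b} then c else \<psi> t)" for t
  have measf: "set_borel_measurable lborel {0..T} \<phi>"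
  proof -
    have e: "(\<lambda>x. indicator {0..T} x *\<^sub>R \<phi> x) = (\<lambda>x. if x \<in> {a..b} then indicator {0..T} x *\<^sub>R c else indicator {0..T} x *\<^sub>R \<psi> x)"
      by (auto simp: \<phi>_def fun_eq_iff)
    show ?thesis unfolding set_borel_measurable_def e
      apply (rule measurable_If_set)
      using measp unfolding set_borel_measurable_def by auto
  qed
  define kc where "kc s = \<mu> * (cos c - cos (\<psi> s))" for s
  define ks where "ks s = \<mu> * (sin c - sin (\<psi> s))" for s
  have cb: "\<bar>\<mu> * cos y - 1\<bar> \<le> \<mu> + 1" "\<bar>\<mu> * sin y\<bar> \<le> \<mu>" for y
    using cb1[OF mu, of y] cb2[OF mu, of y] by auto
  have kb: "\<bar>\<mu> * (cos c - cos y)\<bar> \<le> 2 * \<mu>" "\<bar>\<mu> * (sin c - sin y)\<bar> \<le> 2 * \<mu>" for y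
    using kbnd[OF mu] by auto
  have kcont: "continuous_on UNIV (\<lambda>y. \<mu> * (cos c - cos y))" "continuous_on UNIV (\<lambda>y. \<mu> * (sin c - sin y))"
    by (intro continuous_intros)+
  have kci0: "kc integrable_on {p..q}" "ks integrable_on {p..q}" if "0 \<le> p" "q \<le> T" for p q
    using hkint[OF measp kcont(1) kb(1) that] hkint[OF measp kcont(2) kb(2) that] unfolding kc_def ks_def by auto
  have intg: "(\<lambda>s. h (ch s)) integrable_on {p..q}"
    if "continuous_on UNIV h" "\<And>y. \<bar>h y\<bar> \<le> B" "0 \<le> p" "q \<le> T" "ch = \<psi> \<or> ch = \<phi>" for h :: "real \<Rightarrow> real" and B p q ch
    using that hkint[OF measp, of h B p q] hkint[OF measf, of h B p q] by auto
  have main: "traj \<mu> x0 \<phi> t = traj \<mu> x0 \<psi> t + (integral {a..min b t} kc, integral {a..min b t} ks)"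
    if t: "t \<in> {0..T}" for t
  proof -
    have i1: "(\<lambda>s. \<mu> * cos (ch s) - 1) integrable_on {0..t}" if "ch = \<psi> \<or> ch = \<phi>" for ch
    proof -
      have "continuous_on UNIV (\<lambda>y. \<mu> * cos y - 1)" by (intro continuous_intros)
      then show ?thesis using intg[of "\<lambda>y. \<mu> * cos y - 1" "\<mu>+1" 0 t ch] t that cb(1) by auto
    qed
    have i2: "(\<lambda>s. \<mu> * sin (ch s)) integrable_on {0..t}" if "ch = \<psi> \<or> ch = \<phi>" for ch
    proof -
      have "continuous_on UNIV (\<lambda>y. \<mu> * sin y)" by (intro continuous_intros)
      then show ?thesis using intg[of "\<lambda>y. \<mu> * sin y" "\<mu>" 0 t ch] t that cb(2) by auto
    qed
    have ee: "{a..b} \<inter> {0..t} = {a..min b t}" using ab by auto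
    have d1: "integral {0..t} (\<lambda>s. \<mu> * cos (\<phi> s) - 1) - integral {0..t} (\<lambda>s. \<mu> * cos (\<psi> s) - 1) = integral {a..min b t} kc"
    proof -
      have "integral {0..t} (\<lambda>s. \<mu> * cos (\<phi> s) - 1) - integral {0..t} (\<lambda>s. \<mu> * cos (\<psi> s) - 1)
          = integral {0..t} (\<lambda>s. (\<mu> * cos (\<phi> s) - 1) - (\<mu> * cos (\<psi> s) - 1))"
        using integral_diff[OF i1[OF disjI2[OF refl]] i1[OF disjI1[OF refl]]] by simp
      also have "\<dots> = integral {0..t} (\<lambda>s. if s \<in> {a..b} then kc s else 0)"
        by (rule integral_cong) (auto simp: \<phi>_def kc_def algebra_simps)
      also have "\<dots> = integral {a..min b t} kc" by (simp only: integral_restrict_Int ee)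
      finally show ?thesis .
    qed
    have d2: "integral {0..t} (\<lambda>s. \<mu> * sin (\<phi> s)) - integral {0..t} (\<lambda>s. \<mu> * sin (\<psi> s)) = integral {a..min b t} ks"
    proof -
      have "integral {0..t} (\<lambda>s. \<mu> * sin (\<phi> s)) - integral {0..t} (\<lambda>s. \<mu> * sin (\<psi> s))
          = integral {0..t} (\<lambda>s. (\<mu> * sin (\<phi> s)) - (\<mu> * sin (\<psi> s)))"
        using integral_diff[OF i2[OF disjI2[OF refl]] i2[OF disjI1[OF refl]]] by simp
      also have "\<dots> = integral {0..t} (\<lambda>s. if s \<in> {a..b} then ks s else 0)"
        by (rule integral_cong) (auto simp: \<phi>_def ks_def algebra_simps)
      also have "\<dots> = integral {a..min b t} ks" by (simp only: integral_restrict_Int ee)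
      finally show ?thesis .
    qed
    show ?thesis using d1 d2 unfolding traj_def by simp
  qed
  have bnd: "\<bar>integral {a..min b t} k\<bar> \<le> 2 * \<mu> * measure lborel {a..min b t}"
    if t: "t \<in> {0..T}" and k: "k = kc \<or> k = ks" for t k
  proof -
    have ki: "k integrable_on {a..min b t}"
      using k t ab kci0[of a "min b t"] by auto
    have "norm (integral {a..min b t} k) \<le> integral {a..min b t} (\<lambda>s. 2 * \<mu>)"
      by (rule Henstock_Kurzweil_Integration.integral_norm_bound_integral[OF ki])
         (use k kb in \<open>auto simp: kc_def ks_def\<close>)
    then show ?thesis by (simp add: mult.commute)
  qed
  have cont: "measure lborel {a..min b t} \<le> b - a" for t
    using ab by (cases "a \<le> min b t") auto
  have feasf: "feasible_heading \<mu> x0 T \<phi>"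
    unfolding feasible_heading_def admissible_heading_def
  proof (intro conjI measf ballI)
    fix t assume t: "t \<in> {0..T}"
    show "1 \<le> norm (traj \<mu> x0 \<phi> t)"
    proof (cases "t < a")
      case True
      then have "measure lborel {a..min b t} = 0" by simp
      then have "integral {a..min b t} kc = 0" "integral {a..min b t} ks = 0"
        using bnd[OF t, of kc] bnd[OF t, of ks] by auto
      then show ?thesis using main[OF t] feas t by (simp add: zero_prod_def[symmetric])
    next
      case False
      define E where "E = (integral {a..min b t} kc, integral {a..min b t} ks)"
      have "norm E \<le> \<bar>integral {a..min b t} kc\<bar> + \<bar>integral {a..min b t} ks\<bar>"
        unfolding E_def norm_Pair real_norm_def power2_abs by (rule sqrt_sum_squares_le_sum_abs)
      also have "\<dots> \<le> 4 * \<mu> * (b - a)"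
        using t159[OF bnd[OF t, of kc] bnd[OF t, of ks] cont[of t] mu] by simp
      finally have "norm E \<le> m" using len by simp
      moreover have "norm (traj \<mu> x0 \<psi> t) \<ge> 1 + m" using marg t False by auto
      ultimately show ?thesis using main[OF t] norm_diff_ineq[of "traj \<mu> x0 \<psi> t" E] unfolding E_def by simp
    qed
  qed
  define Ic where "Ic = integral {a..b} kc"
  define Is where "Is = integral {a..b} ks"
  have T0: "T \<in> {0..T}" using ab by auto
  have endp: "traj \<mu> x0 \<phi> T = (r * cos c + Ic, r * sin c + Is)"
    using main[OF T0] X ab by (simp add: Ic_def Is_def min_def)
  have "(norm (traj \<mu> x0 \<phi> T))\<^sup>2 \<le> (norm (traj \<mu> x0 \<psi> T))\<^sup>2" by (rule opt[OF feasf])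
  then have "(r * cos c + Ic)^2 + (r * sin c + Is)^2 \<le> (r * cos c)^2 + (r * sin c)^2"
    unfolding endp X by (simp add: norm_Pair)
  then have "2 * r * (cos c * Ic + sin c * Is) + (Ic^2 + Is^2) \<le> 0"
    by (simp add: power2_eq_square algebra_simps)
  then have "2 * r * (cos c * Ic + sin c * Is) \<le> 0"
    by (rule t176)
  then have neg: "cos c * Ic + sin c * Is \<le> 0" using r by (simp add: mult_le_0_iff)
  define h where "h y = ((cos c - cos y)^2 + (sin c - sin y)^2) / 2" for y
  have hnn: "0 \<le> h y" for y unfolding h_def by simp
  have hid: "h y = 1 - cos (c - y)" for y
    unfolding h_def by (rule t183)
  have hb: "\<bar>h y\<bar> \<le> 2" for y using hnn[of y] hid[of y] cos_ge_minus_one[of "c - y"] by simp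
  have hc: "continuous_on UNIV h" unfolding h_def by (intro continuous_intros) auto
  have si: "set_integrable lborel {a..b} (\<lambda>s. h (\<psi> s))"
    by (rule setint[OF measp hc hb ab(1) ab(3)])
  have hi: "(\<lambda>s. h (\<psi> s)) integrable_on {a..b}" using set_borel_integral_eq_integral(1)[OF si] .
  have kci: "kc integrable_on {a..b}" "ks integrable_on {a..b}"
    using ab kci0[of a b] by auto
  have "cos c * Ic + sin c * Is = integral {a..b} (\<lambda>s. cos c * kc s + sin c * ks s)"
  proof -
    have i1: "(\<lambda>s. cos c * kc s) integrable_on {a..b}" using integrable_on_cmult_left[OF kci(1), of "cos c"] by simp
    have i2: "(\<lambda>s. sin c * ks s) integrable_on {a..b}" using integrable_on_cmult_left[OF kci(2), of "sin c"] by simp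
    show ?thesis unfolding Ic_def Is_def using integral_add[OF i1 i2] by simp
  qed
  also have "\<dots> = integral {a..b} (\<lambda>s. \<mu> * h (\<psi> s))"
  proof (rule integral_cong)
    fix s
    show "cos c * kc s + sin c * ks s = \<mu> * h (\<psi> s)"
      unfolding kc_def ks_def hid by (rule t202)
  qed
  also have "\<dots> = \<mu> * integral {a..b} (\<lambda>s. h (\<psi> s))" by simp
  finally have "\<mu> * integral {a..b} (\<lambda>s. h (\<psi> s)) \<le> 0" using neg by simp
  then have "integral {a..b} (\<lambda>s. h (\<psi> s)) \<le> 0" using mu by (simp add: mult_le_0_iff)
  moreover have "integral {a..b} (\<lambda>s. h (\<psi> s)) \<ge> 0" by (rule integral_nonneg[OF hi]) (simp add: hnn)
  ultimately have "integral {a..b} (\<lambda>s. h (\<psi> s)) = 0" by simp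
  then have "(LINT s : {a..b} | lborel. h (\<psi> s)) = 0" using set_borel_integral_eq_integral(2)[OF si] by simp
  then have I0: "integral\<^sup>L lborel (\<lambda>s. indicator {a..b} s *\<^sub>R h (\<psi> s)) = 0"
    unfolding set_lebesgue_integral_def .
  have II: "integrable lborel (\<lambda>s. indicator {a..b} s *\<^sub>R h (\<psi> s))"
    using si unfolding set_integrable_def .
  have "AE s in lborel. indicator {a..b} s *\<^sub>R h (\<psi> s) = 0"
  proof -
    have nn: "AE s in lborel. 0 \<le> indicator {a..b} s *\<^sub>R h (\<psi> s)"
      by (intro AE_I2) (simp add: hnn)
    show ?thesis using integral_nonneg_eq_0_iff_AE[OF II nn] I0 by simp
  qed
  then show ?thesis
  proof (rule eventually_mono)
    fix s assume z: "indicator {a..b} s *\<^sub>R h (\<psi> s) = 0"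
    have "s \<in> {a..b} \<longrightarrow> (cos c - cos (\<psi> s))^2 + (sin c - sin (\<psi> s))^2 = 0"
    proof
      assume "s \<in> {a..b}"
      then have "h (\<psi> s) = 0" using z by simp
      then show "(cos c - cos (\<psi> s))^2 + (sin c - sin (\<psi> s))^2 = 0" unfolding h_def by simp
    qed
    then show "s \<in> {a..b} \<longrightarrow> cos (\<psi> s) = cos c \<and> sin (\<psi> s) = sin c"
      by (simp add: sum_power2_eq_zero_iff)
  qed
qed


theorem lemma4:
  fixes \<mu> T :: real and x0 :: "real \<times> real" and \<psi> :: "real \<Rightarrow> real"
  assumes "0 < \<mu>" "\<mu> < 1" "0 < T" "norm x0 \<ge> 1"
    and "optimal_heading \<mu> x0 T \<psi>"
  shows "\<exists>c. AE t in lborel. t \<in> {last_contact \<mu> x0 T \<psi> .. T} \<longrightarrow>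
            cos (\<psi> t) = cos c \<and> sin (\<psi> t) = sin c"
proof -
  note mu = assms(1)
  have meas: "admissible_heading T \<psi>" and feas: "\<forall>t\<in>{0..T}. norm (traj \<mu> x0 \<psi> t) \<ge> 1"
    and opt: "\<And>\<phi>. feasible_heading \<mu> x0 T \<phi> \<Longrightarrow>
            (norm (traj \<mu> x0 \<phi> T))\<^sup>2 \<le> (norm (traj \<mu> x0 \<psi> T))\<^sup>2"
    using assms(5) unfolding optimal_heading_def feasible_heading_def by auto
  have measp: "set_borel_measurable lborel {0..T} \<psi>" using meas unfolding admissible_heading_def .
  have contt: "continuous_on {0..T} (traj \<mu> x0 \<psi>)"
  proof -
    have c1: "continuous_on UNIV (\<lambda>y. \<mu> * cos y - 1)" "continuous_on UNIV (\<lambda>y. \<mu> * sin y)"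
      by (intro continuous_intros)+
    have i1: "(\<lambda>s. \<mu> * cos (\<psi> s) - 1) integrable_on {0..T}"
      using hkint[OF measp c1(1), of "\<mu>+1" 0 T] cb2[OF mu] by auto
    have i2: "(\<lambda>s. \<mu> * sin (\<psi> s)) integrable_on {0..T}"
      using hkint[OF measp c1(2), of "\<mu>" 0 T] cb1[OF mu] by auto
    show ?thesis unfolding traj_def
      by (intro continuous_on_Pair continuous_on_add continuous_on_const
          indefinite_integral_continuous_1 i1 i2)
  qed
  obtain p q where pq: "traj \<mu> x0 \<psi> T = (p, q)" by (cases "traj \<mu> x0 \<psi> T")
  define r where "r = sqrt (p^2 + q^2)"
  have "1 \<le> norm (traj \<mu> x0 \<psi> T)" using feas assms(3) by auto
  then have r1: "r \<ge> 1" using pq unfolding r_def by (simp add: norm_Pair)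
  then have r0: "0 < r" by simp
  have "(p / r)^2 + (q / r)^2 = 1"
  proof -
    have r2: "r^2 = p^2 + q^2" unfolding r_def by simp
    have "(p / r)^2 + (q / r)^2 = (p^2 + q^2) / r^2" by (simp add: power_divide add_divide_distrib)
    moreover have "(p^2 + q^2) / r^2 = 1" unfolding r2[symmetric] using r0 by simp
    ultimately show ?thesis by simp
  qed
  then obtain c where c: "p / r = cos c" "q / r = sin c" using sincos_total_2pi by metis
  have X: "traj \<mu> x0 \<psi> T = (r * cos c, r * sin c)"
    using pq c r0 by (auto simp: field_simps)
  define \<tau> where "\<tau> = last_contact \<mu> x0 T \<psi>"
  define S where "S = {t\<in>{0..T}. norm (traj \<mu> x0 \<psi> t) = 1} \<union> {0}"
  have \<tau>S: "\<tau> = Sup S" unfolding \<tau>_def S_def last_contact_def ..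
  have bS: "bdd_above S" unfolding S_def bdd_above_def using assms(3) by (intro exI[of _ T]) auto
  have \<tau>0: "0 \<le> \<tau>" unfolding \<tau>S using bS by (intro cSup_upper) (auto simp: S_def)
  have \<tau>T: "\<tau> \<le> T" unfolding \<tau>S using assms(3) by (intro cSup_least) (auto simp: S_def)
  have gt1: "norm (traj \<mu> x0 \<psi> t) > 1" if "t \<in> {0..T}" "\<tau> < t" for t
  proof -
    have "t \<notin> S" using cSup_upper[OF _ bS, of t] that unfolding \<tau>S by auto
    then show ?thesis using feas that unfolding S_def by force
  qed
  let ?G = "\<lambda>t. cos (\<psi> t) = cos c \<and> sin (\<psi> t) = sin c"
  have Q: "AE t in lborel. t \<in> {s..T} \<longrightarrow> ?G t" if s: "\<tau> < s" "s \<le> T" for s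
  proof -
    have "\<exists>x\<in>{s..T}. \<forall>y\<in>{s..T}. norm (traj \<mu> x0 \<psi> x) \<le> norm (traj \<mu> x0 \<psi> y)"
      using s \<tau>0 by (intro continuous_attains_inf continuous_on_norm continuous_on_subset[OF contt]) auto
    then obtain t0 where t0: "t0 \<in> {s..T}" "\<And>y. y \<in> {s..T} \<Longrightarrow> norm (traj \<mu> x0 \<psi> t0) \<le> norm (traj \<mu> x0 \<psi> y)"
      by blast
    define m where "m = norm (traj \<mu> x0 \<psi> t0) - 1"
    have m0: "0 < m" unfolding m_def using gt1[of t0] t0 s \<tau>0 by auto
    have marg: "\<forall>t\<in>{a..T}. norm (traj \<mu> x0 \<psi> t) \<ge> 1 + m" if "s \<le> a" for a
      using t0(2) that unfolding m_def by auto
    define N :: nat where "N = nat \<lceil>4 * \<mu> * (T - s) / m\<rceil> + 1"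
    have N1: "1 \<le> N" unfolding N_def by simp
    have NN: "4 * \<mu> * (T - s) / m \<le> real N" unfolding N_def by linarith
    define h where "h = (T - s) / real N"
    have h0: "0 \<le> h" unfolding h_def using s by simp
    have hN: "s + real N * h = T" unfolding h_def using N1 by simp
    have hm: "4 * \<mu> * h \<le> m"
    proof -
      have "4 * \<mu> * (T - s) \<le> m * real N" using NN m0 by (simp add: divide_le_eq mult.commute)
      then show ?thesis unfolding h_def using N1 by (simp add: divide_le_eq mult.commute)
    qed
    have win: "AE t in lborel. t \<in> {a..b} \<longrightarrow> ?G t" if "s \<le> a" "a \<le> b" "b \<le> T" "4 * \<mu> * (b - a) \<le> m" for a b
      by (rule window[OF mu meas feas opt X r0 marg[OF that(1)] that(4)]) (use that s \<tau>0 in auto)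
    have ind: "k \<le> N \<Longrightarrow> AE t in lborel. t \<in> {s..s + real k * h} \<longrightarrow> ?G t" for k
    proof (induction k)
      case 0
      show ?case using win[of s s] s m0 by simp
    next
      case (Suc k)
      have k1: "s + real k * h \<le> s + real (Suc k) * h" using h0 by (simp add: algebra_simps)
      have k2: "s + real (Suc k) * h \<le> T"
      proof -
        have "real (Suc k) * h \<le> real N * h" using Suc.prems h0 by (intro mult_right_mono) auto
        then show ?thesis using hN by linarith
      qed
      have w: "AE t in lborel. t \<in> {s + real k * h .. s + real (Suc k) * h} \<longrightarrow> ?G t"
        by (rule win) (use k1 k2 h0 hm in \<open>auto simp: algebra_simps\<close>)
      have ih: "AE t in lborel. t \<in> {s..s + real k * h} \<longrightarrow> ?G t" using Suc by simp
      show ?case using w ih by eventually_elim auto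
    qed
    show ?thesis using ind[of N] hN by simp
  qed
  have A1: "AE t in lborel. \<forall>n::nat. \<tau> + inverse (real (Suc n)) \<le> T \<longrightarrow>
              t \<in> {\<tau> + inverse (real (Suc n))..T} \<longrightarrow> ?G t"
    unfolding AE_all_countable
  proof
    fix n :: nat
    show "AE t in lborel. \<tau> + inverse (real (Suc n)) \<le> T \<longrightarrow>
              t \<in> {\<tau> + inverse (real (Suc n))..T} \<longrightarrow> ?G t"
    proof (cases "\<tau> + inverse (real (Suc n)) \<le> T")
      case True
      have "\<tau> < \<tau> + inverse (real (Suc n))" by simp
      from Q[OF this True] show ?thesis by simp
    qed simp
  qed
  have A2: "AE t in lborel. t \<noteq> \<tau>" by (rule AE_lborel_singleton)
  have "AE t in lborel. t \<in> {\<tau>..T} \<longrightarrow> ?G t"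
    using A1 A2
  proof eventually_elim
    case (elim t)
    show ?case
    proof
      assume t: "t \<in> {\<tau>..T}"
      then have "0 < t - \<tau>" using elim(2) by auto
      then obtain n where n: "inverse (real (Suc n)) < t - \<tau>" using reals_Archimedean by blast
      have "\<tau> + inverse (real (Suc n)) \<le> t" using n by simp
      moreover have "t \<le> T" using t by simp
      ultimately show "?G t" using spec[OF elim(1), of n] by simp
    qed
  qed
  then show ?thesis unfolding \<tau>_def by blast
qed

end
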